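(* Let $A$ be a complex unital Banach algebra and $a,b\in A$ with $d_\rho(a,b)=0$. Suppose $h$ is an entire complex function, not identically zero, all of whose zeros are simple, and that the holomorphic functional calculus elements satisfy $h(a)=h(b)=0$. Then $a=b$.
   Context: For $a,b\in A$ and $n\geq 0$ put $C_{a,b}^n\mathbf 1=\sum_{k=0}^n(-1)^k\binom{n}{k}a^{n-k}b^k$ (with $a^0=b^0=\mathbf 1$). Define $\rho(a,b)=\limsup_{n\to\infty}\|C_{a,b}^n\mathbf 1\|^{1/n}$ and $d_\rho(a,b)=\max\{\rho(a,b),\rho(b,a)\}$. *)

theory Defs
  imports "HOL-Analysis.Analysis"
begin

class cbanach_algebra_1 = real_normed_algebra_1 + banach +
  fixes scaleC :: "complex \<Rightarrow> 'a \<Rightarrow> 'a"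
  assumes scaleC_add_right: "scaleC c (x + y) = scaleC c x + scaleC c y"
    and scaleC_add_left: "scaleC (c + d) x = scaleC c x + scaleC d x"
    and scaleC_scaleC: "scaleC c (scaleC d x) = scaleC (c * d) x"
    and scaleC_one: "scaleC 1 x = x"
    and scaleC_of_real: "scaleC (complex_of_real r) x = scaleR r x"
    and norm_scaleC: "norm (scaleC c x) = cmod c * norm x"
    and mult_scaleC_left: "scaleC c x * y = scaleC c (x * y)"
    and mult_scaleC_right: "x * scaleC c y = scaleC c (x * y)"

text \<open>C^n_{a,b} 1 = sum_{k=0}^n (-1)^k (n choose k) a^(n-k) b^k\<close>
definition Cab :: "'a::ring_1 \<Rightarrow> 'a \<Rightarrow> nat \<Rightarrow> 'a" where
  "Cab a b n = (\<Sum>k\<le>n. of_int ((-1) ^ k * int (n choose k)) * (a ^ (n - k) * b ^ k))"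

definition rho :: "'a::real_normed_algebra_1 \<Rightarrow> 'a \<Rightarrow> ereal" where
  "rho a b = limsup (\<lambda>n. ereal (root n (norm (Cab a b n))))"

definition d_rho :: "'a::real_normed_algebra_1 \<Rightarrow> 'a \<Rightarrow> ereal" where
  "d_rho a b = max (rho a b) (rho b a)"

text \<open>Holomorphic functional calculus of an entire function h at a: for entire h
 it is given by the everywhere convergent Taylor series at 0.\<close>
definition hfc :: "(complex \<Rightarrow> complex) \<Rightarrow> 'a::cbanach_algebra_1 \<Rightarrow> 'a" where
  "hfc h a = (\<Sum>n. scaleC ((deriv ^^ n) h 0 / fact n) (a ^ n))"

end

theory Submission
  imports Defs "HOL-Complex_Analysis.Complex_Analysis" "HOL-Computational_Algebra.Polynomial"
begin


lemma scaleC_zero_right [simp]: "scaleC c (0::'a::cbanach_algebra_1) = 0"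
  using norm_scaleC[of c 0] by simp

lemma scaleC_zero_left [simp]: "scaleC 0 (x::'a::cbanach_algebra_1) = 0"
  using scaleC_of_real[of 0 x] by simp

lemma scaleC_minus_right: "scaleC c (- (x::'a::cbanach_algebra_1)) = - scaleC c x"
  using scaleC_add_right[of c x "-x"] by (metis add.commute add_right_imp_eq scaleC_zero_right add_0 add.right_inverse)

lemma scaleC_diff_right: "scaleC c ((x::'a::cbanach_algebra_1) - y) = scaleC c x - scaleC c y"
  using scaleC_add_right[of c x "-y"] by (simp add: scaleC_minus_right)

lemma scaleC_minus_left: "scaleC (- c) (x::'a::cbanach_algebra_1) = - scaleC c x"
  using scaleC_add_left[of c "-c" x] by (metis add.commute add_right_imp_eq scaleC_zero_left add_0 add.right_inverse)

lemma scaleC_diff_left: "scaleC (c - d) (x::'a::cbanach_algebra_1) = scaleC c x - scaleC d x"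
  using scaleC_add_left[of c "-d" x] by (simp add: scaleC_minus_left)

lemma scaleC_sum_right: "scaleC c (sum f S::'a::cbanach_algebra_1) = (\<Sum>i\<in>S. scaleC c (f i))"
  by (induction S rule: infinite_finite_induct) (auto simp: scaleC_add_right)

lemma scaleC_sum_left: "scaleC (sum f S) (x::'a::cbanach_algebra_1) = (\<Sum>i\<in>S. scaleC (f i) x)"
  by (induction S rule: infinite_finite_induct) (auto simp: scaleC_add_left)

lemma scaleC_mult_scaleC: "scaleC c (x::'a::cbanach_algebra_1) * scaleC d y = scaleC (c * d) (x * y)"
  by (simp add: mult_scaleC_left mult_scaleC_right scaleC_scaleC mult.commute)

lemma scaleC_eq_0_iff: "scaleC c (x::'a::cbanach_algebra_1) = 0 \<longleftrightarrow> c = 0 \<or> x = 0"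
  using norm_scaleC[of c x] by (metis mult_eq_0_iff norm_eq_zero zero_less_norm_iff)

lemma of_int_mult_scaleC: "of_int z * (y::'a::cbanach_algebra_1) = scaleC (of_int z) y"
proof -
  have "of_int z * y = of_real (of_int z) * y" by simp
  also have "\<dots> = scaleR (of_int z) y" by (simp add: scaleR_conv_of_real)
  also have "\<dots> = scaleC (complex_of_real (of_int z)) y" by (rule scaleC_of_real[symmetric])
  finally show ?thesis by simp
qed

definition coef :: "(complex \<Rightarrow> complex) \<Rightarrow> nat \<Rightarrow> complex" where
  "coef f n = (deriv ^^ n) f 0 / fact n"

lemma hfc_coef: "hfc f x = (\<Sum>n. scaleC (coef f n) (x ^ n))"
  by (simp add: hfc_def coef_def)

lemma coef_bound:
  assumes hol: "f holomorphic_on ball 0 R" and xr: "norm (x::'a::cbanach_algebra_1) < R"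
  shows "summable (\<lambda>n. cmod (coef f n) * norm x ^ n)"
proof -
  define r where "r = (norm x + R) / 2"
  have nx: "0 \<le> norm x" by simp
  have R0: "0 < R" using nx xr by (rule le_less_trans)
  have r0: "0 < r" using nx R0 unfolding r_def by (simp add: add_nonneg_pos)
  have xr': "norm x < r" using xr unfolding r_def by (simp add: field_simps)
  have rR: "r < R" using xr unfolding r_def by (simp add: field_simps)
  have sub: "cball 0 r \<subseteq> ball 0 R" using rR by auto
  have cont: "continuous_on (cball 0 r) f"
    using holomorphic_on_imp_continuous_on holomorphic_on_subset[OF hol sub] by blast
  have "compact (f ` cball 0 r)" using compact_continuous_image[OF cont] by simp
  then obtain B where B: "\<And>z. z \<in> cball 0 r \<Longrightarrow> norm (f z) \<le> B"
    using compact_imp_bounded bounded_iff by (metis image_eqI)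
  have "ball 0 r \<subseteq> ball (0::complex) R" using rR by auto
  then have holr: "f holomorphic_on ball 0 r" using holomorphic_on_subset[OF hol] by blast
  have ci: "norm ((deriv ^^ n) f 0) \<le> fact n * B / r ^ n" for n
    by (rule Cauchy_inequality[OF holr cont r0]) (auto intro: B)
  have le: "norm (cmod (coef f n) * norm x ^ n) \<le> B * (norm x / r) ^ n" for n
  proof -
    have "cmod (coef f n) = cmod ((deriv^^n) f 0) / fact n" by (simp add: coef_def norm_divide)
    also have "\<dots> \<le> (fact n * B / r^n) / fact n" by (rule divide_right_mono[OF ci]) simp
    also have "\<dots> = B / r^n" by simp
    finally have "cmod (coef f n) \<le> B / r ^ n" .
    then have "cmod (coef f n) * norm x ^ n \<le> B / r ^ n * norm x ^ n"
      by (rule mult_right_mono) simp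
    then show ?thesis by (simp add: power_divide)
  qed
  have "summable (\<lambda>n. B * (norm x / r) ^ n)"
    using xr' r0 by (intro summable_mult summable_geometric) simp
  then show ?thesis by (rule summable_comparison_test'[where N=0]) (use le in auto)
qed

lemma hfc_summable:
  assumes hol: "f holomorphic_on ball 0 R" and xr: "norm (x::'a::cbanach_algebra_1) < R"
  shows "summable (\<lambda>n. norm (scaleC (coef f n) (x ^ n)))"
proof -
  have "norm (norm (scaleC (coef f n) (x ^ n))) \<le> cmod (coef f n) * norm x ^ n" for n
    by (simp add: norm_scaleC mult_left_mono norm_power_ineq)
  then show ?thesis by (rule summable_comparison_test'[where N=0, OF coef_bound[OF hol xr]])
qed


lemma aux_frac: "(K::complex) \<noteq> 0 \<Longrightarrow> P \<noteq> 0 \<Longrightarrow> Q \<noteq> 0 \<Longrightarrow> K/(P*Q) * A * B / K = A/P * (B/Q)"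
  by (simp add: field_simps)

lemma coef_mult:
  assumes f: "f holomorphic_on ball 0 R" and g: "g holomorphic_on ball 0 R" and R0: "0 < R"
  shows "coef (\<lambda>z. f z * g z) k = (\<Sum>i\<le>k. coef f i * coef g (k - i))"
proof -
  have "(deriv ^^ k) (\<lambda>z. f z * g z) 0 =
        (\<Sum>i = 0..k. of_nat (k choose i) * (deriv ^^ i) f 0 * (deriv ^^ (k-i)) g 0)"
    by (rule higher_deriv_mult[OF f g open_ball]) (simp add: R0)
  then have "coef (\<lambda>z. f z * g z) k =
      (\<Sum>i\<le>k. of_nat (k choose i) * (deriv ^^ i) f 0 * (deriv ^^ (k-i)) g 0 / fact k)"
    by (simp add: coef_def sum_divide_distrib atLeast0AtMost)
  also have "\<dots> = (\<Sum>i\<le>k. coef f i * coef g (k - i))"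
  proof (rule sum.cong[OF refl])
    fix i assume "i \<in> {..k}"
    then have ik: "i \<le> k" by simp
    show "of_nat (k choose i) * (deriv ^^ i) f 0 * (deriv ^^ (k-i)) g 0 / fact k
          = coef f i * coef g (k - i)"
      unfolding binomial_fact[OF ik] coef_def by (rule aux_frac) auto
  qed
  finally show ?thesis .
qed

lemma hfc_mult:
  assumes f: "f holomorphic_on ball 0 R" and g: "g holomorphic_on ball 0 R"
    and xr: "norm (x::'a::cbanach_algebra_1) < R"
  shows "hfc (\<lambda>z. f z * g z) x = hfc f x * hfc g x"
proof -
  have R0: "0 < R" using norm_ge_zero[of x] xr by (rule le_less_trans)
  have "hfc f x * hfc g x = (\<Sum>k. \<Sum>i\<le>k. scaleC (coef f i) (x^i) * scaleC (coef g (k-i)) (x^(k-i)))"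
    unfolding hfc_coef by (rule Cauchy_product[OF hfc_summable[OF f xr] hfc_summable[OF g xr]])
  also have "\<dots> = (\<Sum>k. scaleC (coef (\<lambda>z. f z * g z) k) (x ^ k))"
  proof (rule suminf_cong)
    fix k
    have "(\<Sum>i\<le>k. scaleC (coef f i) (x^i) * scaleC (coef g (k-i)) (x^(k-i)))
        = (\<Sum>i\<le>k. scaleC (coef f i * coef g (k-i)) (x^k))"
    proof (rule sum.cong[OF refl])
      fix i assume "i \<in> {..k}"
      then have "x^i * x^(k-i) = x^k" by (simp add: power_add[symmetric])
      then show "scaleC (coef f i) (x^i) * scaleC (coef g (k-i)) (x^(k-i)) = scaleC (coef f i * coef g (k-i)) (x^k)"
        by (simp add: scaleC_mult_scaleC)
    qed
    also have "\<dots> = scaleC (coef (\<lambda>z. f z * g z) k) (x ^ k)"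
      by (simp add: coef_mult[OF f g R0] scaleC_sum_left)
    finally show "(\<Sum>i\<le>k. scaleC (coef f i) (x^i) * scaleC (coef g (k-i)) (x^(k-i))) = scaleC (coef (\<lambda>z. f z * g z) k) (x ^ k)" .
  qed
  finally show ?thesis by (simp add: hfc_coef)
qed

lemma hfc_add:
  assumes f: "f holomorphic_on ball 0 R" and g: "g holomorphic_on ball 0 R"
    and xr: "norm (x::'a::cbanach_algebra_1) < R"
  shows "hfc (\<lambda>z. f z + g z) x = hfc f x + hfc g x"
proof -
  have R0: "0 < R" using norm_ge_zero[of x] xr by (rule le_less_trans)
  have c: "coef (\<lambda>z. f z + g z) n = coef f n + coef g n" for n
    using higher_deriv_add[OF f g open_ball, of 0 n] R0 by (simp add: coef_def add_divide_distrib)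
  have "hfc f x + hfc g x = (\<Sum>n. scaleC (coef f n) (x ^ n) + scaleC (coef g n) (x ^ n))"
    unfolding hfc_coef
    by (rule suminf_add[OF summable_norm_cancel[OF hfc_summable[OF f xr]]
                          summable_norm_cancel[OF hfc_summable[OF g xr]]])
  then show ?thesis by (simp add: hfc_coef c scaleC_add_left)
qed

lemma hfc_const: "hfc (\<lambda>z. c) (x::'a::cbanach_algebra_1) = scaleC c 1"
proof -
  have "hfc (\<lambda>z. c) x = (\<Sum>n\<in>{0}. scaleC (coef (\<lambda>z. c) n) (x ^ n))"
    unfolding hfc_coef by (rule suminf_finite) (auto simp: coef_def)
  then show ?thesis by (simp add: coef_def)
qed

lemma hfc_ident: "hfc (\<lambda>z. z) (x::'a::cbanach_algebra_1) = x"
proof -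
  have "hfc (\<lambda>z. z) x = (\<Sum>n\<in>{1}. scaleC (coef (\<lambda>z. z) n) (x ^ n))"
    unfolding hfc_coef by (rule suminf_finite) (auto simp: coef_def)
  then show ?thesis by (simp add: coef_def scaleC_one)
qed

lemma hfc_cmult:
  assumes f: "f holomorphic_on ball 0 R" and xr: "norm (x::'a::cbanach_algebra_1) < R"
  shows "hfc (\<lambda>z. c * f z) x = scaleC c (hfc f x)"
proof -
  have "hfc (\<lambda>z. c * f z) x = hfc (\<lambda>z. c) x * hfc f x"
    by (rule hfc_mult[OF _ f xr]) simp
  then show ?thesis by (simp add: hfc_const mult_scaleC_left)
qed

lemma hfc_sum:
  assumes fin: "finite S" and f: "\<And>i. i \<in> S \<Longrightarrow> f i holomorphic_on ball 0 R"
    and xr: "norm (x::'a::cbanach_algebra_1) < R"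
  shows "hfc (\<lambda>z. \<Sum>i\<in>S. f i z) x = (\<Sum>i\<in>S. hfc (f i) x)"
  using fin f
proof (induction S rule: finite_induct)
  case empty
  then show ?case by (simp add: hfc_const)
next
  case (insert j S)
  have "hfc (\<lambda>z. \<Sum>i\<in>insert j S. f i z) x = hfc (\<lambda>z. f j z + (\<Sum>i\<in>S. f i z)) x"
    using insert by simp
  also have "\<dots> = hfc (f j) x + hfc (\<lambda>z. \<Sum>i\<in>S. f i z) x"
    by (rule hfc_add[OF _ _ xr]) (use insert in \<open>auto intro!: holomorphic_on_sum\<close>)
  finally show ?case using insert by simp
qed

lemma hfc_cong:
  assumes "\<And>z. z \<in> ball 0 R \<Longrightarrow> f z = g z" and "0 < R"
  shows "hfc f x = hfc g x"
proof -
  have "eventually (\<lambda>z. f z = g z) (nhds 0)"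
    unfolding eventually_nhds by (intro exI[of _ "ball 0 R"]) (use assms in auto)
  then have "(deriv ^^ n) f 0 = (deriv ^^ n) g 0" for n
    by (rule higher_deriv_cong_ev) simp
  then show ?thesis by (simp add: hfc_def)
qed


lemma entire_divide_zeros:
  assumes "finite F" "\<forall>w\<in>F. f w = 0" "f holomorphic_on UNIV"
  shows "\<exists>g. g holomorphic_on UNIV \<and> (\<forall>z. f z = (\<Prod>w\<in>F. z - w) * g z)"
  using assms
proof (induction F arbitrary: f rule: finite_induct)
  case empty
  then show ?case by auto
next
  case (insert w F)
  define f1 where "f1 = (\<lambda>z. if z = w then deriv f w else (f z - f w) / (z - w))"
  have hol1: "f1 holomorphic_on UNIV" unfolding f1_def by (rule pole_lemma) (use insert in auto)
  have fw: "f w = 0" using insert by simp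
  have eq1: "f z = (z - w) * f1 z" for z by (cases "z = w") (auto simp: f1_def fw)
  have "\<forall>w'\<in>F. f1 w' = 0"
  proof
    fix w' assume "w' \<in> F"
    then have "w' \<noteq> w" "f w' = 0" using insert by auto
    then show "f1 w' = 0" by (simp add: f1_def fw)
  qed
  then obtain g where g: "g holomorphic_on UNIV" "\<forall>z. f1 z = (\<Prod>w\<in>F. z - w) * g z"
    using insert.IH hol1 by blast
  show ?case
  proof (intro exI conjI allI)
    show "g holomorphic_on UNIV" by fact
    fix z
    show "f z = (\<Prod>w\<in>insert w F. z - w) * g z"
      using insert(1,2) by (simp add: eq1 g(2) mult.assoc)
  qed
qed

lemma poly_factor_zero:
  fixes x :: "'a::cbanach_algebra_1"
  assumes h: "h holomorphic_on UNIV" and simple: "\<forall>z. h z = 0 \<longrightarrow> deriv h z \<noteq> 0"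
    and hx: "hfc h x = 0" and F: "F = {z \<in> cball 0 R. h z = 0}" and fin: "finite F"
    and xr: "norm x < R" and g: "g holomorphic_on UNIV" and hpg: "\<forall>z. h z = p z * g z"
    and p: "p = (\<lambda>z. \<Prod>w\<in>F. z - w)"
  shows "hfc p x = 0"
proof -
  have R0: "0 < R" using norm_ge_zero[of x] xr by (rule le_less_trans)
  have php: "p holomorphic_on UNIV" unfolding p by (intro holomorphic_intros)
  have heq: "h = (\<lambda>z. p z * g z)" using hpg by auto
  have gnz: "g z \<noteq> 0" if z: "z \<in> ball 0 R" for z
  proof (cases "h z = 0")
    case False
    then show ?thesis using hpg by auto
  next
    case True
    then have zF: "z \<in> F" using z F by auto
    then have pz: "p z = 0" using fin by (auto simp: p)
    have "deriv h z = p z * deriv g z + deriv p z * g z"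
      unfolding heq
      by (rule deriv_mult; rule holomorphic_on_imp_differentiable_at[of _ UNIV]) (use php g in auto)
    then have "deriv h z = deriv p z * g z" by (simp add: pz)
    then show ?thesis using simple True by auto
  qed
  have gb: "g holomorphic_on ball 0 R" using g by (rule holomorphic_on_subset) auto
  have pb: "p holomorphic_on ball 0 R" using php by (rule holomorphic_on_subset) auto
  have igb: "(\<lambda>z. 1 / g z) holomorphic_on ball 0 R"
    by (intro holomorphic_intros gb) (use gnz in auto)
  have "hfc (\<lambda>z. g z * (1 / g z)) x = hfc g x * hfc (\<lambda>z. 1 / g z) x"
    by (rule hfc_mult[OF gb igb xr])
  moreover have "hfc (\<lambda>z. g z * (1 / g z)) x = hfc (\<lambda>z. 1) x"
    by (rule hfc_cong[OF _ R0]) (use gnz in auto)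
  ultimately have inv: "hfc g x * hfc (\<lambda>z. 1 / g z) x = 1"
    by (simp add: hfc_const scaleC_one)
  have hm: "hfc h x = hfc p x * hfc g x" unfolding heq by (rule hfc_mult[OF pb gb xr])
  have "hfc p x = hfc p x * (hfc g x * hfc (\<lambda>z. 1 / g z) x)" by (simp add: inv)
  also have "\<dots> = hfc h x * hfc (\<lambda>z. 1 / g z) x" by (simp add: hm mult.assoc)
  finally show ?thesis by (simp add: hx)
qed

lemma lagrange_sum:
  fixes F :: "complex set"
  assumes fin: "finite F" and ne: "F \<noteq> {}"
  shows "(\<Sum>w\<in>F. (\<Prod>w'\<in>F-{w}. (z - w')) / (\<Prod>w'\<in>F-{w}. (w - w'))) = 1"
proof -
  define L where "L w = smult (1 / (\<Prod>w'\<in>F-{w}. (w - w'))) (\<Prod>w'\<in>F-{w}. [:-w', 1:])" for w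
  have polyL: "poly (L w) y = (\<Prod>w'\<in>F-{w}. (y - w')) / (\<Prod>w'\<in>F-{w}. (w - w'))" for w y
    by (simp add: L_def poly_prod)
  define P where "P = (\<Sum>w\<in>F. L w)"
  have degL: "degree (L w) \<le> card F - 1" if "w \<in> F" for w
  proof -
    have "degree (L w) \<le> degree (\<Prod>w'\<in>F-{w}. [:-w', 1:])" unfolding L_def by (rule degree_smult_le)
    also have "\<dots> \<le> sum (degree \<circ> (\<lambda>w'. [:-w', 1:])) (F - {w})"
      by (rule degree_prod_sum_le) (use fin in simp)
    also have "\<dots> = card F - 1" using fin that by simp
    finally show ?thesis .
  qed
  have degP: "degree P \<le> card F - 1" unfolding P_def by (rule degree_sum_le[OF fin degL])
  have cardF: "card F > 0" using fin ne by (simp add: card_gt_0_iff)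
  have "P = 1"
  proof (rule poly_eqI_degree[of F])
    fix v assume v: "v \<in> F"
    have "poly P v = (\<Sum>w\<in>F. poly (L w) v)" by (simp add: P_def poly_sum)
    also have "\<dots> = poly (L v) v + (\<Sum>w\<in>F-{v}. poly (L w) v)"
      using fin v by (simp add: sum.remove)
    also have "(\<Sum>w\<in>F-{v}. poly (L w) v) = 0"
    proof (rule sum.neutral, rule ballI)
      fix w assume "w \<in> F - {v}"
      then have "v \<in> F - {w}" using v by auto
      then have "(\<Prod>w'\<in>F-{w}. (v - w')) = 0" using fin by (auto intro: prod_zero)
      then show "poly (L w) v = 0" by (simp add: polyL)
    qed
    also have "poly (L v) v = 1"
    proof -
      have "(\<Prod>w'\<in>F-{v}. (v - w')) \<noteq> 0" using fin by (auto simp: prod_zero_iff)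
      then show ?thesis by (simp add: polyL)
    qed
    finally show "poly P v = poly 1 v" by simp
  next
    show "degree P < card F" using degP cardF by linarith
  next
    show "degree (1::complex poly) < card F" using cardF by simp
  qed
  then have "poly P z = 1" by simp
  then show ?thesis by (simp add: P_def poly_sum polyL)
qed


definition lag :: "complex set \<Rightarrow> complex \<Rightarrow> complex \<Rightarrow> complex" where
  "lag F w z = inverse (\<Prod>w'\<in>F-{w}. (w - w')) * (\<Prod>w'\<in>F-{w}. (z - w'))"

lemma lag_sum: "finite F \<Longrightarrow> F \<noteq> {} \<Longrightarrow> (\<Sum>w\<in>F. lag F w z) = 1"
  using lagrange_sum[of F z] by (simp add: lag_def divide_inverse mult.commute)

lemma hfc_lin: "hfc (\<lambda>z. z - w) (x::'a::cbanach_algebra_1) = x - scaleC w 1"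
proof -
  have R: "norm x < norm x + 1" by simp
  have "hfc (\<lambda>z. z + (- w)) x = hfc (\<lambda>z. z) x + hfc (\<lambda>z. - w) x"
    by (rule hfc_add[OF _ _ R]) (auto intro: holomorphic_intros)
  then show ?thesis by (simp add: hfc_ident hfc_const scaleC_minus_left)
qed

lemma eigen:
  fixes x :: "'a::cbanach_algebra_1"
  assumes fin: "finite F" and ne: "F \<noteq> {}"
    and px: "hfc (\<lambda>z. \<Prod>w\<in>F. z - w) x = 0"
  shows "(\<Sum>w\<in>F. hfc (lag F w) x) = 1"
    and "\<forall>w\<in>F. hfc (lag F w) x * x = scaleC w (hfc (lag F w) x)"
    and "\<forall>w\<in>F. x * hfc (lag F w) x = scaleC w (hfc (lag F w) x)"
proof -
  define R where "R = norm x + 1"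
  have xr: "norm x < R" by (simp add: R_def)
  have holl: "lag F w holomorphic_on ball 0 R" for w
    unfolding lag_def by (intro holomorphic_intros)
  have "hfc (\<lambda>z. \<Sum>w\<in>F. lag F w z) x = (\<Sum>w\<in>F. hfc (lag F w) x)"
    by (rule hfc_sum[OF fin holl xr])
  moreover have "(\<lambda>z. \<Sum>w\<in>F. lag F w z) = (\<lambda>z. 1)" using lag_sum[OF fin ne] by auto
  ultimately show "(\<Sum>w\<in>F. hfc (lag F w) x) = 1" by (simp add: hfc_const scaleC_one)
  have linb: "(\<lambda>z. z - w) holomorphic_on ball 0 R" for w by (intro holomorphic_intros)
  have pb: "(\<lambda>z. \<Prod>w\<in>F. z - w) holomorphic_on ball 0 R" by (intro holomorphic_intros)
  have key: "hfc (\<lambda>z. lag F w z * (z - w)) x = 0" "hfc (\<lambda>z. (z - w) * lag F w z) x = 0"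
    if w: "w \<in> F" for w
  proof -
    have eq: "lag F w z * (z - w) = inverse (\<Prod>w'\<in>F-{w}. (w - w')) * (\<Prod>w\<in>F. z - w)" for z
      using fin w by (simp add: lag_def prod.remove mult_ac)
    have "hfc (\<lambda>z. lag F w z * (z - w)) x
        = hfc (\<lambda>z. inverse (\<Prod>w'\<in>F-{w}. (w - w')) * (\<Prod>w\<in>F. z - w)) x"
      by (simp only: eq)
    also have "\<dots> = 0" by (simp add: hfc_cmult[OF pb xr] px)
    finally show "hfc (\<lambda>z. lag F w z * (z - w)) x = 0" .
    then show "hfc (\<lambda>z. (z - w) * lag F w z) x = 0" by (simp add: mult.commute)
  qed
  show "\<forall>w\<in>F. hfc (lag F w) x * x = scaleC w (hfc (lag F w) x)"
  proof
    fix w assume w: "w \<in> F"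
    have "hfc (lag F w) x * (x - scaleC w 1) = 0"
      using key(1)[OF w] hfc_mult[OF holl linb xr, of w] hfc_lin[of w x] by simp
    then show "hfc (lag F w) x * x = scaleC w (hfc (lag F w) x)"
      by (simp add: right_diff_distrib mult_scaleC_right)
  qed
  show "\<forall>w\<in>F. x * hfc (lag F w) x = scaleC w (hfc (lag F w) x)"
  proof
    fix w assume w: "w \<in> F"
    have "(x - scaleC w 1) * hfc (lag F w) x = 0"
      using key(2)[OF w] hfc_mult[OF linb holl xr, of w] hfc_lin[of w x] by simp
    then show "x * hfc (lag F w) x = scaleC w (hfc (lag F w) x)"
      by (simp add: left_diff_distrib mult_scaleC_left)
  qed
qed


lemma binom_diff: "((w::complex) - v) ^ n = (\<Sum>k\<le>n. of_int ((-1) ^ k * int (n choose k)) * (w ^ (n - k) * v ^ k))"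
proof -
  have "(w - v) ^ n = (- v + w) ^ n" by simp
  also have "\<dots> = (\<Sum>k\<le>n. of_nat (n choose k) * (- v) ^ k * w ^ (n - k))"
    by (rule binomial_ring)
  also have "\<dots> = (\<Sum>k\<le>n. of_int ((-1) ^ k * int (n choose k)) * (w ^ (n - k) * v ^ k))"
  proof (rule sum.cong[OF refl])
    fix k
    have 1: "(- v) ^ k = (-1) ^ k * v ^ k" by (rule power_minus)
    have 2: "(of_int ((-1) ^ k * int (n choose k)) :: complex) = (-1) ^ k * of_nat (n choose k)" by simp
    show "of_nat (n choose k) * (- v) ^ k * w ^ (n - k) = of_int ((-1) ^ k * int (n choose k)) * (w ^ (n - k) * v ^ k)"
      unfolding 1 2 by (simp only: mult_ac)
  qed
  finally show ?thesis .
qed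

lemma Cab_expand:
  fixes a b :: "'a::cbanach_algebra_1"
  assumes finF: "finite F" and finG: "finite G" and sE: "(\<Sum>w\<in>F. E w) = 1" and sQ: "(\<Sum>v\<in>G. Q v) = 1"
    and Ea: "\<forall>w\<in>F. E w * a = scaleC w (E w)" and Qb: "\<forall>v\<in>G. b * Q v = scaleC v (Q v)"
  shows "Cab a b n = (\<Sum>w\<in>F. \<Sum>v\<in>G. scaleC ((w - v) ^ n) (E w * Q v))"
proof -
  have Eam: "E w * a ^ m = scaleC (w ^ m) (E w)" if w: "w \<in> F" for w m
  proof (induction m)
    case 0 then show ?case by (simp add: scaleC_one)
  next
    case (Suc m)
    have "E w * a ^ Suc m = (E w * a ^ m) * a" by (simp only: power_Suc2 mult.assoc)
    also have "\<dots> = scaleC (w ^ m) (E w * a)" by (simp add: Suc mult_scaleC_left)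
    also have "\<dots> = scaleC (w ^ Suc m) (E w)" using Ea w by (simp add: scaleC_scaleC mult.commute)
    finally show ?case .
  qed
  have Qbk: "b ^ k * Q v = scaleC (v ^ k) (Q v)" if v: "v \<in> G" for v k
  proof (induction k)
    case 0 then show ?case by (simp add: scaleC_one)
  next
    case (Suc k)
    have "b ^ Suc k * Q v = b * (b ^ k * Q v)" by (simp add: mult.assoc)
    also have "\<dots> = scaleC (v ^ k) (b * Q v)" by (simp add: Suc mult_scaleC_right)
    also have "\<dots> = scaleC (v ^ Suc k) (Q v)" using Qb v by (simp add: scaleC_scaleC mult.commute)
    finally show ?case .
  qed
  have prod: "a ^ m * b ^ k = (\<Sum>w\<in>F. \<Sum>v\<in>G. scaleC (w ^ m * v ^ k) (E w * Q v))" for m k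
  proof -
    have "a ^ m * b ^ k = (\<Sum>w\<in>F. E w) * (a ^ m * b ^ k) * (\<Sum>v\<in>G. Q v)" by (simp add: sE sQ)
    also have "\<dots> = (\<Sum>w\<in>F. \<Sum>v\<in>G. (E w * a ^ m) * (b ^ k * Q v))"
      by (simp add: sum_distrib_left sum_distrib_right mult.assoc sum.swap[of _ G])
    also have "\<dots> = (\<Sum>w\<in>F. \<Sum>v\<in>G. scaleC (w ^ m * v ^ k) (E w * Q v))"
      by (intro sum.cong refl) (simp add: Eam Qbk scaleC_mult_scaleC)
    finally show ?thesis .
  qed
  have "Cab a b n = (\<Sum>k\<le>n. \<Sum>w\<in>F. \<Sum>v\<in>G.
      scaleC (of_int ((-1) ^ k * int (n choose k)) * (w ^ (n - k) * v ^ k)) (E w * Q v))"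
    unfolding Cab_def
    by (intro sum.cong refl) (simp only: of_int_mult_scaleC prod scaleC_sum_right scaleC_scaleC)
  also have "\<dots> = (\<Sum>w\<in>F. \<Sum>k\<le>n. \<Sum>v\<in>G.
      scaleC (of_int ((-1) ^ k * int (n choose k)) * (w ^ (n - k) * v ^ k)) (E w * Q v))"
    by (rule sum.swap)
  also have "\<dots> = (\<Sum>w\<in>F. \<Sum>v\<in>G. \<Sum>k\<le>n.
      scaleC (of_int ((-1) ^ k * int (n choose k)) * (w ^ (n - k) * v ^ k)) (E w * Q v))"
    by (intro sum.cong refl) (rule sum.swap)
  also have "\<dots> = (\<Sum>w\<in>F. \<Sum>v\<in>G. scaleC ((w - v) ^ n) (E w * Q v))"
    by (intro sum.cong refl) (simp add: binom_diff scaleC_sum_left)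
  finally show ?thesis .
qed


definition small :: "(nat \<Rightarrow> 'a::real_normed_vector) \<Rightarrow> bool" where
  "small s \<longleftrightarrow> (\<forall>\<epsilon>>0. \<exists>K. eventually (\<lambda>n. norm (s n) \<le> K * \<epsilon> ^ n) sequentially)"

lemma small_key:
  fixes y :: "complex \<Rightarrow> 'a::cbanach_algebra_1"
  assumes "finite C" "small (\<lambda>n. \<Sum>c\<in>C. scaleC (c ^ n) (y c))" "c \<in> C" "c \<noteq> 0"
  shows "y c = 0"
  using assms
proof (induction C arbitrary: y c rule: finite_induct)
  case empty then show ?case by simp
next
  case (insert c0 C)
  define T where "T y' n = (\<Sum>c\<in>C. scaleC (c ^ n) (y' c))" for y' :: "complex \<Rightarrow> 'a" and n
  define S where "S n = (\<Sum>c\<in>insert c0 C. scaleC (c ^ n) (y c))" for n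
  have S: "S n = scaleC (c0 ^ n) (y c0) + T y n" for n
    using insert(1,2) by (simp add: S_def T_def)
  have smS: "small S" using insert.prems(1) by (simp add: S_def[abs_def])
  have restC: "\<forall>c\<in>C. c \<noteq> 0 \<longrightarrow> y c = 0"
  proof (cases "c0 = 0")
    case True
    have "small (T y)"
      unfolding small_def
    proof (intro allI impI)
      fix \<epsilon> :: real assume "\<epsilon> > 0"
      then obtain K where K: "eventually (\<lambda>n. norm (S n) \<le> K * \<epsilon> ^ n) sequentially"
        using smS unfolding small_def by blast
      have "eventually (\<lambda>n. norm (T y n) \<le> K * \<epsilon> ^ n) sequentially"
        using K eventually_ge_at_top[of 1]
      proof eventually_elim
        case (elim n)
        have "S n = T y n" using True elim(2) by (simp add: S zero_power)
        then show ?case using elim by simp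
      qed
      then show "\<exists>K. eventually (\<lambda>n. norm (T y n) \<le> K * \<epsilon> ^ n) sequentially" by blast
    qed
    then show ?thesis using insert.IH unfolding T_def by blast
  next
    case False
    define y' where "y' c = scaleC (c - c0) (y c)" for c
    have diff: "T y' n = S (Suc n) - scaleC c0 (S n)" for n
    proof -
      have "S (Suc n) - scaleC c0 (S n) = T y (Suc n) - scaleC c0 (T y n)"
        by (simp add: S scaleC_add_right scaleC_scaleC)
      also have "\<dots> = (\<Sum>c\<in>C. scaleC (c ^ Suc n) (y c) - scaleC c0 (scaleC (c ^ n) (y c)))"
        by (simp add: T_def scaleC_sum_right sum_subtractf)
      also have "\<dots> = T y' n"
        unfolding T_def y'_def
      proof (rule sum.cong[OF refl])
        fix c
        have "scaleC (c ^ Suc n) (y c) - scaleC c0 (scaleC (c ^ n) (y c)) = scaleC (c ^ Suc n - c0 * c ^ n) (y c)"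
          by (simp add: scaleC_scaleC scaleC_diff_left)
        also have "c ^ Suc n - c0 * c ^ n = c ^ n * (c - c0)" by (simp add: algebra_simps)
        finally show "scaleC (c ^ Suc n) (y c) - scaleC c0 (scaleC (c ^ n) (y c)) = scaleC (c ^ n) (scaleC (c - c0) (y c))"
          by (simp add: scaleC_scaleC)
      qed
      finally show ?thesis by simp
    qed
    have "small (T y')"
      unfolding small_def
    proof (intro allI impI)
      fix \<epsilon> :: real assume e: "\<epsilon> > 0"
      then obtain K where K: "eventually (\<lambda>n. norm (S n) \<le> K * \<epsilon> ^ n) sequentially"
        using smS unfolding small_def by blast
      have K': "eventually (\<lambda>n. norm (S (Suc n)) \<le> K * \<epsilon> ^ Suc n) sequentially"
        using K by (rule eventually_sequentially_Suc[THEN iffD2])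
      have "eventually (\<lambda>n. norm (T y' n) \<le> (K * (\<epsilon> + cmod c0)) * \<epsilon> ^ n) sequentially"
        using K K'
      proof eventually_elim
        case (elim n)
        have "norm (T y' n) \<le> norm (S (Suc n)) + norm (scaleC c0 (S n))"
          unfolding diff by (rule norm_triangle_ineq4)
        also have "\<dots> = norm (S (Suc n)) + cmod c0 * norm (S n)" by (simp add: norm_scaleC)
        also have "\<dots> \<le> K * \<epsilon> ^ Suc n + cmod c0 * (K * \<epsilon> ^ n)"
          using elim by (intro add_mono mult_left_mono) auto
        also have "\<dots> = (K * (\<epsilon> + cmod c0)) * \<epsilon> ^ n" by (simp add: algebra_simps)
        finally show ?case .
      qed
      then show "\<exists>K. eventually (\<lambda>n. norm (T y' n) \<le> K * \<epsilon> ^ n) sequentially" by blast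
    qed
    then have "\<forall>c\<in>C. c \<noteq> 0 \<longrightarrow> y' c = 0" using insert.IH unfolding T_def by blast
    then show ?thesis using insert(2) by (auto simp: y'_def scaleC_eq_0_iff)
  qed
  show ?case
  proof (cases "c \<in> C")
    case True
    then show ?thesis using restC insert.prems by blast
  next
    case False
    then have cc0: "c = c0" and c0: "c0 \<noteq> 0" using insert.prems by auto
    have T0: "T y n = 0" if "n \<ge> 1" for n
      unfolding T_def
    proof (rule sum.neutral, rule ballI)
      fix c assume "c \<in> C"
      then show "scaleC (c ^ n) (y c) = 0" using restC that by (cases "c = 0") (auto simp: zero_power)
    qed
    have e: "cmod c0 / 2 > 0" using c0 by simp
    obtain K where K: "eventually (\<lambda>n. norm (S n) \<le> K * (cmod c0 / 2) ^ n) sequentially"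
      using smS e unfolding small_def by blast
    have ev: "eventually (\<lambda>n. norm (y c0) \<le> K * (1/2) ^ n) sequentially"
      using K eventually_ge_at_top[of 1]
    proof eventually_elim
      case (elim n)
      have "cmod c0 ^ n * norm (y c0) = norm (S n)"
        using T0[OF elim(2)] by (simp add: S norm_scaleC norm_power)
      also have "\<dots> \<le> K * (cmod c0 / 2) ^ n" using elim by simp
      also have "\<dots> = cmod c0 ^ n * (K * (1/2) ^ n)" by (simp add: power_divide)
      finally show ?case using c0 by (simp add: mult_le_cancel_left_pos)
    qed
    have "(\<lambda>n. K * (1/2::real) ^ n) \<longlonglongrightarrow> 0"
      by (intro tendsto_mult_right_zero LIMSEQ_power_zero) simp
    then have "norm (y c0) \<le> 0"
      using ev by (rule tendsto_lowerbound) simp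
    then show ?thesis using cc0 by simp
  qed
qed

lemma rho_small:
  assumes "rho a b \<le> 0"
  shows "small (Cab a b)"
  unfolding small_def
proof (intro allI impI)
  fix \<epsilon> :: real assume e: "\<epsilon> > 0"
  have "limsup (\<lambda>n. ereal (root n (norm (Cab a b n)))) < ereal \<epsilon>"
  proof -
    have "(0::ereal) < ereal \<epsilon>" using e by simp
    then show ?thesis using assms unfolding rho_def by (rule le_less_trans[rotated])
  qed
  then have ev: "eventually (\<lambda>n. ereal (root n (norm (Cab a b n))) < ereal \<epsilon>) sequentially"
    by (rule Limsup_lessD)
  have "eventually (\<lambda>n. norm (Cab a b n) \<le> 1 * \<epsilon> ^ n) sequentially"
    using ev eventually_ge_at_top[of 1]
  proof eventually_elim
    case (elim n)
    then have r: "root n (norm (Cab a b n)) \<le> \<epsilon>" by simp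
    have "norm (Cab a b n) = root n (norm (Cab a b n)) ^ n" using elim(2) by simp
    also have "\<dots> \<le> \<epsilon> ^ n" using r by (intro power_mono) (auto intro: real_root_ge_zero)
    finally show ?case by simp
  qed
  then show "\<exists>K. eventually (\<lambda>n. norm (Cab a b n) \<le> K * \<epsilon> ^ n) sequentially" by blast
qed


theorem theorem2p2:
  fixes a b :: "'a::cbanach_algebra_1" and h :: "complex \<Rightarrow> complex"
  assumes "d_rho a b = 0"
    and "h holomorphic_on UNIV"
    and "\<exists>z. h z \<noteq> 0"
    and "\<forall>z. h z = 0 \<longrightarrow> deriv h z \<noteq> 0"
    and "hfc h a = 0" and "hfc h b = 0"
  shows "a = b"
proof -
  note hol = assms(2) and simple = assms(4) and ha = assms(5) and hb = assms(6)
  have one_nz: "(1::'a) \<noteq> 0" by simp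
  define R where "R = max (norm a) (norm b) + 1"
  have aR: "norm a < R" and bR: "norm b < R" by (auto simp: R_def)
  have nc: "\<not> h constant_on UNIV"
  proof
    assume "h constant_on UNIV"
    then obtain c where c: "\<And>z. h z = c" unfolding constant_on_def by blast
    then have "c \<noteq> 0" using assms(3) by auto
    moreover have "h = (\<lambda>z. c)" using c by auto
    ultimately have "hfc h a \<noteq> 0" by (simp add: hfc_const scaleC_eq_0_iff)
    then show False using ha by simp
  qed
  define F where "F = {z \<in> cball 0 R. h z = 0}"
  have fin: "finite F" unfolding F_def
    by (rule holomorphic_compact_finite_zeros[OF hol open_UNIV connected_UNIV compact_cball _ nc]) simp
  obtain g where g: "g holomorphic_on UNIV" "\<forall>z. h z = (\<Prod>w\<in>F. z - w) * g z"
    using entire_divide_zeros[OF fin _ hol] unfolding F_def by auto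
  have pa: "hfc (\<lambda>z. \<Prod>w\<in>F. z - w) a = 0"
    by (rule poly_factor_zero[OF hol simple ha F_def fin aR g(1) g(2) refl])
  have pb: "hfc (\<lambda>z. \<Prod>w\<in>F. z - w) b = 0"
    by (rule poly_factor_zero[OF hol simple hb F_def fin bR g(1) g(2) refl])
  have ne: "F \<noteq> {}"
  proof
    assume "F = {}"
    then have "hfc (\<lambda>z. \<Prod>w\<in>F. z - w) a = 1" by (simp add: hfc_const scaleC_one)
    then show False using pa by simp
  qed
  define E where "E w = hfc (lag F w) a" for w
  define Q where "Q w = hfc (lag F w) b" for w
  note eA = eigen[OF fin ne pa, folded E_def]
  note eB = eigen[OF fin ne pb, folded Q_def]
  define X where "X p = E (fst p) * Q (snd p)" for p
  define \<delta> where "\<delta> p = fst p - snd p" for p :: "complex \<times> complex"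
  define Y where "Y c = (\<Sum>p\<in>{p. p \<in> F \<times> F \<and> \<delta> p = c}. X p)" for c
  have finI: "finite (F \<times> F)" using fin by simp
  have group: "Cab a b n = (\<Sum>c\<in>\<delta> ` (F \<times> F). scaleC (c ^ n) (Y c))" for n
  proof -
    have "Cab a b n = (\<Sum>w\<in>F. \<Sum>v\<in>F. scaleC ((w - v) ^ n) (E w * Q v))"
      by (rule Cab_expand[OF fin fin eA(1) eB(1) eA(2) eB(3)])
    also have "\<dots> = (\<Sum>p\<in>F \<times> F. scaleC (\<delta> p ^ n) (X p))"
      by (simp add: sum.cartesian_product \<delta>_def X_def case_prod_beta)
    also have "\<dots> = (\<Sum>c\<in>\<delta> ` (F \<times> F). \<Sum>p\<in>{p. p \<in> F \<times> F \<and> \<delta> p = c}. scaleC (\<delta> p ^ n) (X p))"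
      by (rule sum.image_gen[OF finI])
    also have "\<dots> = (\<Sum>c\<in>\<delta> ` (F \<times> F). scaleC (c ^ n) (Y c))"
      by (intro sum.cong refl) (simp add: Y_def scaleC_sum_right)
    finally show ?thesis .
  qed
  have "rho a b \<le> d_rho a b" by (simp add: d_rho_def)
  then have "rho a b \<le> 0" using assms(1) by simp
  then have "small (Cab a b)" by (rule rho_small)
  then have sm: "small (\<lambda>n. \<Sum>c\<in>\<delta> ` (F \<times> F). scaleC (c ^ n) (Y c))"
    by (simp add: group[symmetric])
  have Y0: "Y c = 0" if "c \<in> \<delta> ` (F \<times> F)" "c \<noteq> 0" for c
    by (rule small_key[OF _ sm that]) (use finI in simp)
  have "Cab a b 1 = a - b" by (simp add: Cab_def)
  also have "Cab a b 1 = (\<Sum>c\<in>\<delta> ` (F \<times> F). scaleC (c ^ 1) (Y c))" by (rule group)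
  also have "\<dots> = 0"
  proof (rule sum.neutral, rule ballI)
    fix c assume c: "c \<in> \<delta> ` (F \<times> F)"
    show "scaleC (c ^ 1) (Y c) = 0"
    proof (cases "c = 0")
      case True then show ?thesis by simp
    next
      case False then show ?thesis using Y0[OF c] by simp
    qed
  qed
  finally show ?thesis by simp
qed

end
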